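(* Let $q$ be an odd prime power, let $t\ge0$ and $k\ge1$ be integers and $n=2k$. Let $\delta\in\mathbb{F}_{q^k}$, let $\alpha\in\mathbb{F}_{q^n}$ satisfy $\alpha^{q^k}=-\alpha$ and $\beta\in\mathbb{F}_{q^n}$ satisfy $\beta^{q^k}=-\beta$. Let $L(x)=\sum_i a_i x^{q^i}$ be a $q$-polynomial with all coefficients $a_i\in\mathbb{F}_{q^k}$. Then $$f(x)=\alpha(x^{q^k}+x+\delta)^t+\beta\,\mathrm{Tr}(x)+L(x)$$ is a permutation polynomial of $\mathbb{F}_{q^n}$ if and only if $L(x)$ is a permutation polynomial of $\mathbb{F}_{q^n}$.
   Context: $\mathrm{Tr}$ denotes the trace function from $\mathbb{F}_{q^n}$ to $\mathbb{F}_q$, $\mathrm{Tr}(x)=x+x^q+\cdots+x^{q^{n-1}}$. A permutation polynomial of $\mathbb{F}_{q^n}$ is one inducing a bijection of $\mathbb{F}_{q^n}$. *)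

theory Defs
  imports "HOL-Computational_Algebra.Primes"
begin

definition qtrace :: "nat \<Rightarrow> nat \<Rightarrow> 'a::comm_ring_1 \<Rightarrow> 'a" where
  "qtrace q n x = (\<Sum>i<n. x ^ (q ^ i))"

definition qpoly :: "nat \<Rightarrow> (nat \<Rightarrow> 'a::comm_ring_1) \<Rightarrow> nat \<Rightarrow> 'a \<Rightarrow> 'a" where
  "qpoly q a m x = (\<Sum>i<m. a i * x ^ (q ^ i))"

definition is_perm :: "('a \<Rightarrow> 'a) \<Rightarrow> bool" where
  "is_perm f = bij f"

end

theory Submission
  imports Defs "HOL-Number_Theory.Number_Theory"
begin

lemma char_eq:
  fixes p e N :: nat
  assumes "prime p" "card (UNIV :: 'a::{field,finite} set) = p ^ N"
  shows "CHAR('a) = p"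
proof -
  have pos: "CHAR('a) > 0" by (rule finite_imp_CHAR_pos) simp
  have pr: "prime CHAR('a)" using prime_CHAR_semidom[OF pos] .
  have "CHAR('a) dvd p ^ N" using CHAR_dvd_CARD[where 'a='a] assms(2) by simp
  hence "CHAR('a) dvd p" using pr prime_dvd_power by blast
  thus ?thesis using pr assms(1) primes_dvd_imp_eq by blast
qed

lemma pow_card_same:
  fixes x :: "'a::{field,finite}"
  shows "x ^ card (UNIV :: 'a set) = x"
proof (cases "x = 0")
  case False
  have "x * (\<Prod>y\<in>UNIV-{0}. x * y) = x * x ^ (card (UNIV :: 'a set) - 1) * \<Prod>(UNIV-{0})"
    by (simp add: prod.distrib mult_ac)
  also have "x * x ^ (card (UNIV :: 'a set) - 1) = x ^ Suc (card (UNIV :: 'a set) - 1)"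
    by (subst power_Suc) auto
  also have "Suc (card (UNIV :: 'a set) - 1) = card (UNIV :: 'a set)"
    using finite_UNIV_card_ge_0[where ?'a = 'a] by simp
  also have "(\<Prod>y\<in>UNIV-{0}. x * y) = (\<Prod>y\<in>UNIV-{0}. y)"
    by (rule prod.reindex_bij_witness[of _ "\<lambda>y. y / x" "\<lambda>y. x * y"]) (use False in auto)
  finally show ?thesis
    by simp
qed (use finite_UNIV_card_ge_0[where ?'a = 'a] in auto)

lemma sum_split_add:
  "(\<Sum>i<a+b. g i) = (\<Sum>i<a. g i) + (\<Sum>i<b. g (a+i::nat))"
  by (induction b) (auto simp: add_ac)

theorem mainTheorem5:
  fixes q p e k t m :: nat
    and \<delta> \<alpha> \<beta> :: "'a::{field,finite}"
    and a :: "nat \<Rightarrow> 'a"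
  assumes "prime p" and "e \<ge> 1" and "q = p ^ e" and "odd q"
    and "k \<ge> 1" and "card (UNIV :: 'a set) = q ^ (2 * k)"
    and "\<delta> ^ (q ^ k) = \<delta>"
    and "\<alpha> ^ (q ^ k) = - \<alpha>"
    and "\<beta> ^ (q ^ k) = - \<beta>"
    and "\<forall>i<m. a i ^ (q ^ k) = a i"
  shows "is_perm (\<lambda>x. \<alpha> * (x ^ (q ^ k) + x + \<delta>) ^ t + \<beta> * qtrace q (2 * k) x + qpoly q a m x)
         \<longleftrightarrow> is_perm (qpoly q a m)"
proof -
  define Q where "Q = q ^ k"
  have card: "card (UNIV :: 'a set) = p ^ (e * (2 * k))"
    using assms(3,6) by (simp add: power_mult)
  have ch: "CHAR('a) = p" using char_eq[OF assms(1) card] .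
  have prc: "prime CHAR('a)" using ch assms(1) by simp
  have frob: "(x + y) ^ (q ^ j) = x ^ (q ^ j) + y ^ (q ^ j)" for x y :: 'a and j
    by (rule freshmans_dream'[OF prc, where n="e*j"]) (simp add: ch assms(3) power_mult)
  have frobs: "(\<Sum>i\<in>A. g i) ^ (q ^ j) = (\<Sum>i\<in>A. g i ^ (q ^ j))" for g :: "nat \<Rightarrow> 'a" and A j
    by (rule freshmans_dream_sum'[OF prc, where n="e*j"]) (simp add: ch assms(3) power_mult)
  have QQ: "x ^ Q ^ 2 = x" for x :: 'a
  proof -
    have "Q ^ 2 = card (UNIV :: 'a set)" using assms(6) by (simp add: Q_def power_mult mult.commute)
    thus ?thesis using pow_card_same by metis
  qed
  have comm: "(x ^ (q ^ i)) ^ Q = (x ^ Q) ^ (q ^ i)" for x :: 'a and i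
    by (simp flip: power_mult add: mult.commute)
  define T where "T x = x ^ Q + x" for x :: 'a
  define L where "L = qpoly q a m"
  define S where "S y = (\<Sum>i<k. y ^ (q ^ i))" for y :: 'a
  define \<Phi> where "\<Phi> y = \<alpha> * (y + \<delta>) ^ t + \<beta> * S y" for y
  have Tadd: "T (x + y) = T x + T y" for x y
    unfolding T_def Q_def by (simp add: frob add_ac)
  have Tfix: "(T x) ^ Q = T x" for x
    unfolding T_def Q_def using QQ[of x] frob[of "x ^ q ^ k" x k]
    by (simp add: Q_def power_mult[symmetric] power2_eq_square add.commute)
  have Ladd: "L (x + y) = L x + L y" for x y
    unfolding L_def qpoly_def by (simp add: frob distrib_left sum.distrib)
  have LQ: "(L x) ^ Q = L (x ^ Q)" for x
  proof -
    have "(L x) ^ Q = (\<Sum>i<m. (a i * x ^ (q ^ i)) ^ Q)"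
      unfolding L_def qpoly_def Q_def by (rule frobs)
    also have "\<dots> = (\<Sum>i<m. a i * (x ^ Q) ^ (q ^ i))"
      by (rule sum.cong) (use assms(10) comm in \<open>auto simp: power_mult_distrib Q_def\<close>)
    finally show ?thesis unfolding L_def qpoly_def .
  qed
  have LT: "L (T x) = T (L x)" for x
    unfolding T_def using Ladd LQ by simp
  have Tr: "qtrace q (2 * k) x = S (T x)" for x
  proof -
    have "qtrace q (2 * k) x = (\<Sum>i<k. x ^ (q ^ i)) + (\<Sum>i<k. x ^ (q ^ (k + i)))"
      unfolding qtrace_def by (simp add: mult_2 sum_split_add)
    also have "\<dots> = S (T x)"
      unfolding S_def T_def Q_def
      by (simp add: frob sum.distrib power_add add.commute flip: power_mult) (simp add: mult.commute)
    finally show ?thesis .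
  qed
  have f_eq: "(\<lambda>x. \<alpha> * (x ^ (q ^ k) + x + \<delta>) ^ t + \<beta> * qtrace q (2 * k) x + qpoly q a m x)
     = (\<lambda>x. \<Phi> (T x) + L x)"
    by (rule ext) (simp add: \<Phi>_def T_def Q_def Tr L_def)
  have SQ: "(S y) ^ Q = S (y ^ Q)" for y
    unfolding S_def Q_def using frobs comm unfolding Q_def by simp
  have PhiQ: "\<Phi> (T x) ^ Q = - \<Phi> (T x)" for x
  proof -
    have "\<Phi> (T x) ^ Q = \<alpha> ^ Q * ((T x) ^ Q + \<delta> ^ Q) ^ t + \<beta> ^ Q * (S (T x)) ^ Q"
    proof -
      have "((T x + \<delta>) ^ t) ^ Q = ((T x + \<delta>) ^ Q) ^ t"
        by (simp flip: power_mult add: mult.commute)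
      also have "\<dots> = ((T x) ^ Q + \<delta> ^ Q) ^ t" unfolding Q_def by (simp add: frob)
      finally show ?thesis
        unfolding \<Phi>_def Q_def using frob by (simp add: power_mult_distrib)
    qed
    also have "\<dots> = - \<Phi> (T x)"
      using Tfix[of x] SQ[of "T x"] assms(7,8,9) unfolding \<Phi>_def Q_def by simp
    finally show ?thesis .
  qed
  have TPhi: "T (\<Phi> (T x)) = 0" for x
  proof -
    have "T (\<Phi> (T x)) = \<Phi> (T x) ^ Q + \<Phi> (T x)" by (rule T_def)
    also have "\<dots> = - \<Phi> (T x) + \<Phi> (T x)" by (simp only: PhiQ)
    also have "\<dots> = 0" by (rule add.left_inverse)
    finally show ?thesis .
  qed
  have Tf: "T (\<Phi> (T x) + L x) = L (T x)" for x
    by (simp only: Tadd TPhi LT add_0_left)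
  show ?thesis
    unfolding f_eq is_perm_def
  proof
    assume b: "bij (\<lambda>x. \<Phi> (T x) + L x)"
    let ?R = "range T"
    have sub: "L ` ?R = ?R"
    proof
      show "L ` ?R \<subseteq> ?R"
      proof (rule image_subsetI)
        fix r assume "r \<in> ?R"
        then obtain y where "r = T y" by blast
        hence "L r = T (L y)" by (simp only: LT)
        thus "L r \<in> ?R" by blast
      qed
      show "?R \<subseteq> L ` ?R"
      proof
        fix r assume "r \<in> ?R"
        then obtain w where w: "r = T w" by auto
        have "\<exists>x. w = (\<lambda>x. \<Phi> (T x) + L x) x" by (rule surjD[OF bij_is_surj[OF b]])
        then obtain x where "w = \<Phi> (T x) + L x" by blast
        hence "r = L (T x)" using w Tf by (simp only:)
        thus "r \<in> L ` ?R" by blast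
      qed
    qed
    have injR: "inj_on L ?R"
      by (rule eq_card_imp_inj_on) (simp_all add: sub)
    have "inj L"
    proof (rule injI)
      fix x y assume "L x = L y"
      hence "L (T x) = L (T y)" by (simp only: LT)
      hence "T x = T y" using injR by (auto dest: inj_onD)
      hence "\<Phi> (T x) + L x = \<Phi> (T y) + L y" using \<open>L x = L y\<close> by simp
      thus "x = y" using b by (auto dest: bij_is_inj injD)
    qed
    thus "bij (qpoly q a m)" unfolding L_def[symmetric] using finite_UNIV_inj_surj[OF finite_UNIV] by (simp add: bij_def)
  next
    assume "bij (qpoly q a m)"
    hence b: "bij L" unfolding L_def .
    have "inj (\<lambda>x. \<Phi> (T x) + L x)"
    proof (rule injI)
      fix x y assume h: "\<Phi> (T x) + L x = \<Phi> (T y) + L y"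
      hence "L (T x) = L (T y)" by (simp only: Tf[symmetric])
      hence "T x = T y" using b by (auto dest: bij_is_inj injD)
      hence "L x = L y" using h by simp
      thus "x = y" using b by (auto dest: bij_is_inj injD)
    qed
    thus "bij (\<lambda>x. \<Phi> (T x) + L x)" using finite_UNIV_inj_surj[OF finite_UNIV] by (simp add: bij_def)
  qed
qed

end
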